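(* Fix $\beta\in[0,2]$ and let $M_0,M_1,M_2,\dots\in\mathfrak M^\beta$, with $\beta$-inversions $M_n^\beta$. 1. $M_n\to M_0$ on $\mathbb R^d_0$ if and only if $M_n^\beta\to M_0^\beta$ on $\mathbb R^d_0$. 2. $\lim_{\epsilon\downarrow0}\limsup_{n\to\infty}\int_{|x|<\epsilon}|x|^2M_n(dx)=0$ if and only if $\lim_{N\to\infty}\limsup_{n\to\infty}\int_{|x|>N}|x|^\beta M_n^\beta(dx)=0$.
   Context: For $\beta\in[0,2]$, $\mathfrak M^\beta$ is the class of Borel measures $M$ on $\mathbb R^d$ with $M(\{0\})=0$ and $\int_{\mathbb R^d}(|x|^2\wedge|x|^\beta)M(dx)<\infty$. For $M\in\mathfrak M^\beta$, the $\beta$-inversion $M^\beta$ is the measure with $M^\beta(\{0\})=0$ and $M^\beta(A)=\int_{\mathbb R^d}1_A(x/|x|^2)|x|^{2+\beta}M(dx)$ for Borel $A$. $\mathbb R^d_0=\mathbb R^d\setminus\{0\}$, and $M_n\to M_0$ on $\mathbb R^d_0$ means $\int f\,dM_n\to\int f\,dM_0$ for every bounded continuous $f:\mathbb R^d\to\mathbb R$ vanishing on a neighborhood of $0$ and on a neighborhood of infinity. *)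

theory Defs
  imports "HOL-Analysis.Analysis" "HOL-Probability.Probability"
begin

definition frakM :: "real \<Rightarrow> 'a::euclidean_space measure set" where
  "frakM b = {M. sets M = sets borel \<and> emeasure M {0} = 0 \<and>
      (\<integral>\<^sup>+ x. ennreal (min ((norm x)\<^sup>2) (norm x powr b)) \<partial>M) < \<infinity>}"

text \<open>The \<open>\<beta>\<close>-inversion: \<open>M^\<beta>(A) = \<integral> 1_A(x/|x|^2) |x|^(2+\<beta>) M(dx)\<close>
  (the point 0 gets weight 0, so \<open>M^\<beta>{0} = 0\<close>).\<close>
definition beta_inversion :: "real \<Rightarrow> 'a::euclidean_space measure \<Rightarrow> 'a measure" where
  "beta_inversion b M =
     distr (density M (\<lambda>x. ennreal (norm x powr (2 + b)))) borel (\<lambda>x. x /\<^sub>R (norm x)\<^sup>2)"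

definition test_fun0 :: "('a::euclidean_space \<Rightarrow> real) \<Rightarrow> bool" where
  "test_fun0 f \<longleftrightarrow> continuous_on UNIV f \<and> bounded (range f) \<and>
     (\<exists>e>0. \<forall>x. norm x < e \<longrightarrow> f x = 0) \<and>
     (\<exists>N. \<forall>x. norm x > N \<longrightarrow> f x = 0)"

definition conv_R0 :: "(nat \<Rightarrow> 'a::euclidean_space measure) \<Rightarrow> 'a measure \<Rightarrow> bool" where
  "conv_R0 Ms M0 \<longleftrightarrow> (\<forall>f. test_fun0 f \<longrightarrow>
      (\<lambda>n. integral\<^sup>L (Ms n) f) \<longlonglongrightarrow> integral\<^sup>L M0 f)"

end

theory Submission
  imports Defs
begin

definition T :: "'a::euclidean_space \<Rightarrow> 'a" where "T x = x /\<^sub>R (norm x)\<^sup>2"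

lemma T_meas: "T \<in> borel_measurable borel"
  unfolding T_def by measurable

lemma norm_T: "x \<noteq> 0 \<Longrightarrow> norm (T x) = 1 / norm x"
  by (simp add: T_def power2_eq_square field_simps)

lemma T_T: "T (T x) = x"
  by (cases "x = 0") (auto simp: T_def norm_T power2_eq_square field_simps)

lemma integral_inv:
  fixes f :: "'a::euclidean_space \<Rightarrow> real"
  assumes "sets M = sets borel" "f \<in> borel_measurable borel"
  shows "integral\<^sup>L (beta_inversion b M) f = integral\<^sup>L M (\<lambda>x. norm x powr (2+b) * f (T x))"
proof -
  have sd: "sets (density M (\<lambda>x. ennreal (norm x powr (2 + b)))) = sets borel"
    using assms(1) by simp
  have m: "T \<in> measurable (density M (\<lambda>x. ennreal (norm x powr (2 + b)))) borel"
    unfolding measurable_cong_sets[OF sd refl] by (rule T_meas)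
  have bm: "borel_measurable M = borel_measurable borel"
    by (rule measurable_cong_sets[OF assms(1) refl])
  have "integral\<^sup>L (beta_inversion b M) f = integral\<^sup>L (density M (\<lambda>x. ennreal (norm x powr (2 + b)))) (\<lambda>x. f (T x))"
    unfolding beta_inversion_def T_def[symmetric] by (rule integral_distr[OF m assms(2)])
  also have "\<dots> = integral\<^sup>L M (\<lambda>x. norm x powr (2+b) *\<^sub>R f (T x))"
    apply (rule integral_density)
    subgoal unfolding bm by (rule measurable_compose[OF T_meas assms(2)])
    subgoal unfolding bm by measurable
    subgoal by simp
    done
  finally show ?thesis by simp
qed

lemma nn_inv:
  fixes N :: real
  assumes "sets M = sets borel" "N > 0"
  shows "(\<integral>\<^sup>+ x. indicator {x. norm x > N} x * ennreal (norm x powr b) \<partial>(beta_inversion b M))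
     = (\<integral>\<^sup>+ x. indicator {x. norm x < inverse N} x * ennreal ((norm x)\<^sup>2) \<partial>M)"
proof -
  have sd: "sets (density M (\<lambda>x. ennreal (norm x powr (2 + b)))) = sets borel"
    using assms(1) by simp
  have m: "T \<in> measurable (density M (\<lambda>x. ennreal (norm x powr (2 + b)))) borel"
    unfolding measurable_cong_sets[OF sd refl] by (rule T_meas)
  have bm: "borel_measurable M = borel_measurable borel"
    by (rule measurable_cong_sets[OF assms(1) refl])
  have "(\<integral>\<^sup>+ x. indicator {x. norm x > N} x * ennreal (norm x powr b) \<partial>(beta_inversion b M))
    = (\<integral>\<^sup>+ x. indicator {x. norm x > N} (T x) * ennreal (norm (T x) powr b) \<partial>(density M (\<lambda>x. ennreal (norm x powr (2 + b)))))"
    unfolding beta_inversion_def T_def[symmetric] by (rule nn_integral_distr[OF m]) simp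
  also have "\<dots> = (\<integral>\<^sup>+ x. ennreal (norm x powr (2 + b)) * (indicator {x. norm x > N} (T x) * ennreal (norm (T x) powr b)) \<partial>M)"
  proof (rule nn_integral_density)
    show "(\<lambda>x. ennreal (norm x powr (2 + b))) \<in> borel_measurable M"
      unfolding bm by measurable
    have gm: "(\<lambda>y::'a. indicator {y. N < norm y} y * ennreal (norm y powr b)) \<in> borel_measurable borel"
      by simp
    show "(\<lambda>x. indicator {x. N < norm x} (T x) * ennreal (norm (T x) powr b)) \<in> borel_measurable M"
      unfolding bm by (rule measurable_compose[OF T_meas gm])
  qed
  also have "\<dots> = (\<integral>\<^sup>+ x. indicator {x. norm x < inverse N} x * ennreal ((norm x)\<^sup>2) \<partial>M)"
  proof (rule nn_integral_cong)
    fix x :: 'a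
    show "ennreal (norm x powr (2 + b)) * (indicator {x. norm x > N} (T x) * ennreal (norm (T x) powr b)) =
         indicator {x. norm x < inverse N} x * ennreal ((norm x)\<^sup>2)"
    proof (cases "x = 0")
      case True then show ?thesis using assms by (simp add: T_def)
    next
      case False
      then have p: "norm x > 0" by simp
      have i: "(N < 1 / norm x) = (norm x < inverse N)" using p assms(2)
        by (simp add: field_simps)
      have pb: "norm x powr b > 0" using p by simp
      have "norm x powr (2 + b) * (1 / norm x) powr b = norm x powr 2 * norm x powr b / norm x powr b"
        using p by (simp add: powr_add powr_divide)
      also have "\<dots> = (norm x)\<^sup>2" using pb p by (simp add: powr_numeral)
      finally have e: "norm x powr (2 + b) * (1 / norm x) powr b = (norm x)\<^sup>2" .
      have nT: "norm (T x) = 1 / norm x" by (rule norm_T[OF False])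
      show ?thesis
      proof (cases "norm x < inverse N")
        case True
        then have tx: "T x \<in> {x. N < norm x}" using i nT by simp
        have "ennreal (norm x powr (2+b)) * ennreal (norm (T x) powr b) = ennreal (norm x powr (2+b) * norm (T x) powr b)"
          by (rule ennreal_mult[symmetric]) simp_all
        also have "\<dots> = ennreal ((norm x)\<^sup>2)" using e nT by simp
        finally show ?thesis using True tx by simp
      next
        case False
        then have tx: "T x \<notin> {x. N < norm x}" using i nT by simp
        show ?thesis using False tx by simp
      qed
    qed
  qed
  finally show ?thesis .
qed

lemma test_G:
  assumes "test_fun0 f"
  shows "test_fun0 (\<lambda>x. norm x powr (2+b) * f (T x))" (is "test_fun0 ?g")
proof -
  from assms obtain e N where e: "e > 0" "\<And>x. norm x < e \<Longrightarrow> f x = 0"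
    and N: "\<And>x. norm x > N \<Longrightarrow> f x = 0" and cf: "continuous_on UNIV f"
    unfolding test_fun0_def by blast
  define N' where "N' = max N 1"
  have N'p: "N' > 0" "N' \<ge> N" unfolding N'_def by auto
  have z1: "?g x = 0" if "norm x < inverse N'" for x
  proof (cases "x = 0")
    case False
    have "N * norm x \<le> N' * norm x" using N'p by (intro mult_right_mono) auto
    moreover have "N' * norm x < 1" using that N'p False by (simp add: field_simps)
    ultimately have "N * norm x < 1" by linarith
    then have "norm (T x) > N" using False
      by (simp add: norm_T field_simps)
    then show ?thesis using N by simp
  qed simp
  have z2: "?g x = 0" if "norm x > inverse e" for x
  proof -
    have "x \<noteq> 0" using that e by (auto)
    then have "norm (T x) < e" using that e
      by (simp add: norm_T field_simps)
    then show ?thesis using e by simp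
  qed
  have c1: "continuous_on (ball 0 (inverse N')) ?g"
  proof (rule continuous_on_eq[OF continuous_on_const[of _ 0]])
    fix x :: 'a assume "x \<in> ball 0 (inverse N')"
    then have "norm x < inverse N'" by simp
    from z1[OF this] show "0 = ?g x" by simp
  qed
  have cT: "continuous_on (-{0}) T"
    unfolding T_def by (intro continuous_intros) auto
  have c2: "continuous_on (-{0}) ?g"
    apply (intro continuous_intros continuous_on_compose2[OF cf cT])
    by auto
  have U: "UNIV = ball 0 (inverse N') \<union> (-{0::'a})" using N'p by auto
  have cg: "continuous_on UNIV ?g"
    unfolding U by (rule continuous_on_open_Un[OF _ _ c1 c2]) auto
  have r: "range ?g = ?g ` cball 0 (inverse e)"
  proof
    show "range ?g \<subseteq> ?g ` cball 0 (inverse e)"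
    proof
      fix y assume "y \<in> range ?g"
      then obtain x where x: "y = ?g x" by auto
      show "y \<in> ?g ` cball 0 (inverse e)"
      proof (cases "norm x > inverse e")
        case True
        then have "y = ?g 0" using x z2 by simp
        then show ?thesis using e by auto
      next
        case False then show ?thesis using x by auto
      qed
    qed
  qed auto
  have "bounded (range ?g)"
    unfolding r
    by (intro compact_imp_bounded compact_continuous_image continuous_on_subset[OF cg]) auto
  moreover have "\<exists>e>0. \<forall>x. norm x < e \<longrightarrow> ?g x = 0"
    using z1 N'p by (intro exI[of _ "inverse N'"]) auto
  moreover have "\<exists>N. \<forall>x. norm x > N \<longrightarrow> ?g x = 0"
    using z2 by blast
  ultimately show ?thesis unfolding test_fun0_def using cg by blast
qed

lemma GG:
  assumes "test_fun0 f"
  shows "norm x powr (2+b) * (norm (T x) powr (2+b) * f (T (T x))) = f x"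
proof (cases "x = 0")
  case True
  from assms obtain e where e: "e > 0" "\<And>x. norm x < e \<Longrightarrow> f x = 0"
    unfolding test_fun0_def by blast
  then show ?thesis using True by simp
next
  case False
  then have "norm x powr (2+b) * norm (T x) powr (2+b) = 1"
    by (simp add: norm_T powr_divide)
  then show ?thesis by (simp add: T_T mult.assoc[symmetric])
qed

lemma test_meas: "test_fun0 f \<Longrightarrow> f \<in> borel_measurable borel"
  unfolding test_fun0_def by (auto intro: borel_measurable_continuous_onI)

lemma conv_fwd:
  assumes "\<And>n. sets (Ms n) = sets borel" "sets M0 = sets borel" "conv_R0 Ms M0"
  shows "conv_R0 (\<lambda>n. beta_inversion b (Ms n)) (beta_inversion b M0)"
  unfolding conv_R0_def
proof (intro allI impI)
  fix f :: "'a \<Rightarrow> real" assume f: "test_fun0 f"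
  have "test_fun0 (\<lambda>x. norm x powr (2+b) * f (T x))" by (rule test_G[OF f])
  then have "(\<lambda>n. integral\<^sup>L (Ms n) (\<lambda>x. norm x powr (2+b) * f (T x))) \<longlonglongrightarrow> integral\<^sup>L M0 (\<lambda>x. norm x powr (2+b) * f (T x))"
    using assms(3) unfolding conv_R0_def by blast
  then show "(\<lambda>n. integral\<^sup>L (beta_inversion b (Ms n)) f) \<longlonglongrightarrow> integral\<^sup>L (beta_inversion b M0) f"
    using integral_inv[OF assms(1) test_meas[OF f]] integral_inv[OF assms(2) test_meas[OF f]] by simp
qed

lemma conv_bwd:
  assumes "\<And>n. sets (Ms n) = sets borel" "sets M0 = sets borel"
    "conv_R0 (\<lambda>n. beta_inversion b (Ms n)) (beta_inversion b M0)"
  shows "conv_R0 Ms M0"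
  unfolding conv_R0_def
proof (intro allI impI)
  fix f :: "'a \<Rightarrow> real" assume f: "test_fun0 f"
  define g where "g = (\<lambda>x. norm x powr (2+b) * f (T x))"
  have g: "test_fun0 g" unfolding g_def by (rule test_G[OF f])
  have e: "integral\<^sup>L M f = integral\<^sup>L (beta_inversion b M) g" if "sets M = sets borel" for M
    using integral_inv[OF that test_meas[OF g], of b] GG[OF f, of _ b] unfolding g_def by simp
  have "(\<lambda>n. integral\<^sup>L (beta_inversion b (Ms n)) g) \<longlonglongrightarrow> integral\<^sup>L (beta_inversion b M0) g"
    using assms(3) g unfolding conv_R0_def by blast
  then show "(\<lambda>n. integral\<^sup>L (Ms n) f) \<longlonglongrightarrow> integral\<^sup>L M0 f"
    using e assms(1,2) by simp
qed

theorem proposition1: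
  fixes b :: real and M :: "nat \<Rightarrow> 'a::euclidean_space measure"
  assumes "0 \<le> b" "b \<le> 2"
    and "\<And>n. M n \<in> frakM b"
  shows "(conv_R0 (\<lambda>n. M (Suc n)) (M 0) \<longleftrightarrow>
           conv_R0 (\<lambda>n. beta_inversion b (M (Suc n))) (beta_inversion b (M 0)))
       \<and> (((\<lambda>\<epsilon>. limsup (\<lambda>n. \<integral>\<^sup>+ x. indicator {x. norm x < \<epsilon>} x * ennreal ((norm x)\<^sup>2) \<partial>(M n)))
            \<longlongrightarrow> 0) (at_right 0)
         \<longleftrightarrow>
         ((\<lambda>N::real. limsup (\<lambda>n. \<integral>\<^sup>+ x. indicator {x. norm x > N} x * ennreal (norm x powr b)
                                  \<partial>(beta_inversion b (M n))))
            \<longlongrightarrow> 0) at_top)"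
proof -
  have s: "\<And>n. sets (M n) = sets borel" using assms(3) unfolding frakM_def by blast
  let ?F = "(\<lambda>\<epsilon>. limsup (\<lambda>n. \<integral>\<^sup>+ x. indicator {x. norm x < \<epsilon>} x * ennreal ((norm x)\<^sup>2) \<partial>(M n)))"
  let ?H = "(\<lambda>N::real. limsup (\<lambda>n. \<integral>\<^sup>+ x. indicator {x. norm x > N} x * ennreal (norm x powr b)
                                  \<partial>(beta_inversion b (M n))))"
  have HF: "?H N = ?F (inverse N)" if "N > 0" for N
  proof -
    have "\<And>n. (\<integral>\<^sup>+ x. indicator {x. norm x > N} x * ennreal (norm x powr b) \<partial>(beta_inversion b (M n)))
       = (\<integral>\<^sup>+ x. indicator {x. norm x < inverse N} x * ennreal ((norm x)\<^sup>2) \<partial>(M n))"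
      by (rule nn_inv[OF s that])
    then show ?thesis by (simp only:)
  qed
  have p2: "(?F \<longlongrightarrow> 0) (at_right 0) \<longleftrightarrow> (?H \<longlongrightarrow> 0) at_top"
  proof
    assume "(?F \<longlongrightarrow> 0) (at_right 0)"
    then have "((\<lambda>N. ?F (inverse N)) \<longlongrightarrow> 0) at_top"
      by (rule filterlim_compose[of ?F "nhds 0" "at_right 0" inverse at_top, OF _ filterlim_inverse_at_right_top])
    moreover have "eventually (\<lambda>N. ?F (inverse N) = ?H N) at_top"
      using eventually_gt_at_top[of 0] by eventually_elim (simp add: HF)
    ultimately show "(?H \<longlongrightarrow> 0) at_top" by (rule Lim_transform_eventually)
  next
    assume "(?H \<longlongrightarrow> 0) at_top"
    then have "((\<lambda>e. ?H (inverse e)) \<longlongrightarrow> 0) (at_right 0)"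
      by (rule filterlim_compose[of ?H "nhds 0" at_top inverse "at_right 0", OF _ filterlim_inverse_at_top_right])
    moreover have "eventually (\<lambda>e::real. 0 < e) (at_right 0)"
      by (simp add: eventually_at_filter)
    then have "eventually (\<lambda>e. ?H (inverse e) = ?F e) (at_right 0)"
      by eventually_elim (simp add: HF)
    ultimately show "(?F \<longlongrightarrow> 0) (at_right 0)" by (rule Lim_transform_eventually)
  qed
  have p1: "conv_R0 (\<lambda>n. M (Suc n)) (M 0) \<longleftrightarrow>
           conv_R0 (\<lambda>n. beta_inversion b (M (Suc n))) (beta_inversion b (M 0))"
  proof
    assume "conv_R0 (\<lambda>n. M (Suc n)) (M 0)"
    then show "conv_R0 (\<lambda>n. beta_inversion b (M (Suc n))) (beta_inversion b (M 0))"
      by (rule conv_fwd[of "\<lambda>n. M (Suc n)" "M 0", OF s s])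
  next
    assume "conv_R0 (\<lambda>n. beta_inversion b (M (Suc n))) (beta_inversion b (M 0))"
    then show "conv_R0 (\<lambda>n. M (Suc n)) (M 0)"
      by (rule conv_bwd[of "\<lambda>n. M (Suc n)" "M 0", OF s s])
  qed
  show ?thesis using p1 p2 by (rule conjI)
qed
end
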